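(* Let $\mu\in\mathcal P_c^*(\mathbb R^2)$. Then there exists a constant $c>0$ such that $\operatorname{std}(\widehat{\mathcal R}_\theta[\mu])\ge c$ for all $\theta\in\mathbb S_1$.
   Context: $\mathbb S_1=\{x\in\mathbb R^2:\|x\|=1\}$; $\mathcal R_\theta[\mu]=(\langle\cdot,\theta\rangle)_\#\mu$. Fix a reference Borel probability measure $\rho$ on $\mathbb R$ without atoms. For a probability measure $\nu$ on $\mathbb R$ with $F_\nu(t)=\nu((-\infty,t])$, $F_\nu^{[-1]}(t)=\inf\{s:F_\nu(s)>t\}$ and the CDT is $\hat\nu=F_\nu^{[-1]}\circ F_\rho$; $\widehat{\mathcal R}_\theta[\mu]$ is the CDT of $\mathcal R_\theta[\mu]$. For $g\in L^2_\rho(\mathbb R)$, $\operatorname{mean}(g)=\int g\,\mathrm d\rho$, $\operatorname{std}(g)=(\int|g-\operatorname{mean}(g)|^2\mathrm d\rho)^{1/2}$. $\mathcal P_c^*(\mathbb R^2)$ is the set of compactly supported Borel probability measures on $\mathbb R^2$ whose support has affine hull of dimension $>1$. *)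

theory Defs
  imports "HOL-Probability.Probability"
begin

definition S1 :: "(real^2) set" where
  "S1 = {x. norm x = 1}"

definition radon :: "(real^2) measure \<Rightarrow> real^2 \<Rightarrow> real measure" where
  "radon \<mu> \<theta> = distr \<mu> borel (\<lambda>x. x \<bullet> \<theta>)"

definition cdf_ginv :: "real measure \<Rightarrow> real \<Rightarrow> real" where
  "cdf_ginv \<nu> t = Inf {s. cdf \<nu> s > t}"

definition cdt :: "real measure \<Rightarrow> real measure \<Rightarrow> real \<Rightarrow> real" where
  "cdt \<rho> \<nu> = (\<lambda>x. cdf_ginv \<nu> (cdf \<rho> x))"

definition mean :: "real measure \<Rightarrow> (real \<Rightarrow> real) \<Rightarrow> real" where
  "mean \<rho> g = integral\<^sup>L \<rho> g"

definition std :: "real measure \<Rightarrow> (real \<Rightarrow> real) \<Rightarrow> real" where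
  "std \<rho> g = sqrt (\<integral>x. (g x - mean \<rho> g)\<^sup>2 \<partial>\<rho>)"

definition msupport :: "'a::metric_space measure \<Rightarrow> 'a set" where
  "msupport \<mu> = {x. \<forall>e>0. emeasure \<mu> (ball x e) > 0}"

definition Pc_star :: "(real^2) measure set" where
  "Pc_star = {\<mu>. prob_space \<mu> \<and> sets \<mu> = sets borel \<and>
                 compact (msupport \<mu>) \<and> aff_dim (msupport \<mu>) > 1}"

end

theory Submission
  imports Defs
begin


lemma uc_measure:
  fixes \<rho> :: "real measure"
  assumes rd: "real_distribution \<rho>" and na: "\<And>x. measure \<rho> {x} = 0"
  and S: "S \<in> sets borel" and up: "\<And>x y. x \<in> S \<Longrightarrow> x \<le> y \<Longrightarrow> y \<in> S"
  and ge: "\<And>x. x \<in> S \<Longrightarrow> cdf \<rho> x \<ge> t" and le: "\<And>x. x \<notin> S \<Longrightarrow> cdf \<rho> x \<le> t"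
  and t0: "0 \<le> t" and t1: "t \<le> 1"
  shows "measure \<rho> S = 1 - t"
proof -
  interpret real_distribution \<rho> by fact
  consider "S = {}" | "S = UNIV" | "S \<noteq> {}" "S \<noteq> UNIV" by blast
  then show ?thesis
  proof cases
    case 1
    have "1 \<le> t"
      by (rule tendsto_upperbound[OF cdf_lim_at_top_prob]) (auto simp: 1 le)
    then show ?thesis using t1 1 by simp
  next
    case 2
    have "t \<le> 0"
      by (rule tendsto_lowerbound[OF cdf_lim_at_bot]) (auto simp: 2 ge)
    then show ?thesis using t0 2 prob_space by simp
  next
    case 3
    then obtain a where a: "a \<notin> S" by blast
    have bdd: "bdd_below S"
      unfolding bdd_below_def using a up by (meson linear)
    define q where "q = Inf S"
    have h1: "x \<in> S" if "x > q" for x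
      using cInf_less_iff[OF 3(1) bdd, of x] that up q_def by (meson less_imp_le)
    have h2: "x \<notin> S" if "x < q" for x
      using cInf_lower[OF _ bdd, of x] that q_def by force
    have cont: "isCont (cdf \<rho>) q" using isCont_cdf na by blast
    have r: "((cdf \<rho>) \<longlongrightarrow> cdf \<rho> q) (at_right q)"
      using cont by (simp add: isCont_def filterlim_at_split)
    have l: "((cdf \<rho>) \<longlongrightarrow> cdf \<rho> q) (at_left q)"
      using cont by (simp add: isCont_def filterlim_at_split)
    have "t \<le> cdf \<rho> q"
      by (rule tendsto_lowerbound[OF r]) (auto simp: eventually_at_right_field intro!: ge h1 exI[of _ "q+1"])
    moreover have "cdf \<rho> q \<le> t"
      by (rule tendsto_upperbound[OF l]) (auto simp: eventually_at_left_field intro!: le h2 exI[of _ "q-1"])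
    ultimately have Fq: "cdf \<rho> q = t" by simp
    have sub1: "{q<..} \<subseteq> S" using h1 by auto
    have sub2: "S \<subseteq> {q..}" using h2 by force
    have m1: "measure \<rho> {q<..} = 1 - t"
    proof -
      have "{q<..} = space \<rho> - {..q}" by auto
      then show ?thesis using prob_compl[of "{..q}"] Fq by (simp add: cdf_def)
    qed
    have "{q..} = {q<..} \<union> {q}" by auto
    then have m2: "measure \<rho> {q..} = 1 - t"
      using finite_measure_Union[of "{q<..}" "{q}"] m1 na by simp
    have "measure \<rho> {q<..} \<le> measure \<rho> S" using sub1 S by (intro finite_measure_mono) auto
    moreover have "measure \<rho> S \<le> measure \<rho> {q..}" using sub2 by (intro finite_measure_mono) auto
    ultimately show ?thesis using m1 m2 by simp
  qed
qed

lemma cdf_meas: "cdf M \<in> borel_measurable borel" if "finite_borel_measure M"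
  using that by (intro borel_measurable_mono) (auto simp: mono_def finite_borel_measure.cdf_nondecreasing)

lemma unif_lt:
  fixes \<rho> :: "real measure"
  assumes rd: "real_distribution \<rho>" and na: "\<And>x. measure \<rho> {x} = 0"
  and c0: "0 \<le> c" and c1: "c \<le> 1"
  shows "measure \<rho> {x. cdf \<rho> x < c} = c"
proof -
  interpret real_distribution \<rho> by fact
  have Fm[measurable]: "cdf \<rho> \<in> borel_measurable borel" by (rule cdf_meas) unfold_locales
  have S: "{x. c \<le> cdf \<rho> x} \<in> sets borel" by measurable
  have "measure \<rho> {x. c \<le> cdf \<rho> x} = 1 - c"
    by (rule uc_measure[OF rd na S]) (auto intro: order_trans cdf_nondecreasing c0 c1)
  moreover have "{x. cdf \<rho> x < c} = space \<rho> - {x. c \<le> cdf \<rho> x}" by auto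
  ultimately show ?thesis using prob_compl[of "{x. c \<le> cdf \<rho> x}"] S by simp
qed

lemma unif_le:
  fixes \<rho> :: "real measure"
  assumes rd: "real_distribution \<rho>" and na: "\<And>x. measure \<rho> {x} = 0"
  and c0: "0 \<le> c" and c1: "c \<le> 1"
  shows "measure \<rho> {x. cdf \<rho> x \<le> c} = c"
proof -
  interpret real_distribution \<rho> by fact
  have Fm[measurable]: "cdf \<rho> \<in> borel_measurable borel" by (rule cdf_meas) unfold_locales
  have S: "{x. c < cdf \<rho> x} \<in> sets borel" by measurable
  have "measure \<rho> {x. c < cdf \<rho> x} = 1 - c"
    by (rule uc_measure[OF rd na S]) (auto intro: less_le_trans cdf_nondecreasing c0 c1)
  moreover have "{x. cdf \<rho> x \<le> c} = space \<rho> - {x. c < cdf \<rho> x}" by auto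
  ultimately show ?thesis using prob_compl[of "{x. c < cdf \<rho> x}"] S by simp
qed

lemma ginv_props:
  fixes \<nu> :: "real measure"
  assumes rd: "real_distribution \<nu>" and t0: "0 < t" and t1: "t < 1"
  shows "{s. cdf \<nu> s > t} \<noteq> {}" "bdd_below {s. cdf \<nu> s > t}"
proof -
  interpret real_distribution \<nu> by fact
  have "\<forall>\<^sub>F s in at_top. cdf \<nu> s > t"
    using cdf_lim_at_top_prob t1 by (rule order_tendstoD)
  then obtain s where "cdf \<nu> s > t" by (auto simp: eventually_at_top_linorder)
  then show "{s. cdf \<nu> s > t} \<noteq> {}" by auto
  have "\<forall>\<^sub>F s in at_bot. cdf \<nu> s < t"
    using cdf_lim_at_bot t0 by (rule order_tendstoD)
  then obtain s0 where s0: "\<And>s. s \<le> s0 \<Longrightarrow> cdf \<nu> s < t" by (auto simp: eventually_at_bot_linorder)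
  show "bdd_below {s. cdf \<nu> s > t}"
    unfolding bdd_below_def using s0 by (metis linear mem_Collect_eq not_less_iff_gr_or_eq)
qed

lemma ginv_le1:
  fixes \<nu> :: "real measure"
  assumes rd: "real_distribution \<nu>" and t0: "0 < t" and t1: "t < 1" and "cdf \<nu> s > t"
  shows "cdf_ginv \<nu> t \<le> s"
  unfolding cdf_ginv_def using ginv_props[OF rd t0 t1] assms(4) by (intro cInf_lower) auto

lemma ginv_le2:
  fixes \<nu> :: "real measure"
  assumes rd: "real_distribution \<nu>" and t0: "0 < t" and t1: "t < 1" and g: "cdf_ginv \<nu> t \<le> s"
  shows "t \<le> cdf \<nu> s"
proof -
  interpret real_distribution \<nu> by fact
  note p = ginv_props[OF rd t0 t1]
  have "cdf \<nu> s' > t" if "s' > s" for s'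
  proof -
    have "Inf {s. cdf \<nu> s > t} < s'" using g that unfolding cdf_ginv_def by simp
    then obtain y where "cdf \<nu> y > t" "y < s'" using cInf_less_iff[OF p] by auto
    then show ?thesis using cdf_nondecreasing[of y s'] by simp
  qed
  then show ?thesis
    using cdf_is_right_cont[of s]
    by (intro tendsto_lowerbound[of "cdf \<nu>" "cdf \<nu> s" "at_right s"])
       (auto simp: continuous_within eventually_at_right_field intro!: less_imp_le exI[of _ "s+1"])
qed

lemma ginv_meas:
  fixes \<nu> :: "real measure"
  assumes rd: "real_distribution \<nu>"
  shows "cdf_ginv \<nu> \<in> borel_measurable borel"
proof (rule borel_measurable_piecewise_mono[of "{{..<0},{0},{0<..<1},{1..}}"])
  interpret real_distribution \<nu> by fact
  fix c :: "real set" assume c: "c \<in> {{..<0},{0},{0<..<1},{1..}}"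
  have e1: "cdf_ginv \<nu> t = Inf UNIV" if "t < 0" for t
  proof -
    have "{s. cdf \<nu> s > t} = UNIV" using that cdf_nonneg by (auto intro: less_le_trans)
    then show ?thesis by (simp add: cdf_ginv_def)
  qed
  have e2: "cdf_ginv \<nu> t = Inf {}" if "t \<ge> 1" for t
  proof -
    have "{s. cdf \<nu> s > t} = {}" using that cdf_bounded_prob by (smt (verit) empty_Collect_eq)
    then show ?thesis by (simp add: cdf_ginv_def)
  qed
  have m3: "mono_on {0<..<1} (cdf_ginv \<nu>)"
  proof (rule mono_onI)
    fix r s :: real assume "r \<in> {0<..<1}" "s \<in> {0<..<1}" "r \<le> s"
    then show "cdf_ginv \<nu> r \<le> cdf_ginv \<nu> s"
      unfolding cdf_ginv_def
      using ginv_props[OF rd, of r] ginv_props[OF rd, of s]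
      by (intro cInf_superset_mono) auto
  qed
  show "mono_on c (cdf_ginv \<nu>)"
    using c
  proof safe
    show "mono_on {0<..<1} (cdf_ginv \<nu>)" by (rule m3)
  qed (auto intro!: mono_onI simp: e1 e2)
qed auto

lemma cdt_distr:
  fixes \<rho> \<nu> :: "real measure"
  assumes rd: "real_distribution \<rho>" and na: "\<And>x. measure \<rho> {x} = 0"
  and nd: "real_distribution \<nu>"
  shows "cdt \<rho> \<nu> \<in> borel_measurable borel" "distr \<rho> borel (cdt \<rho> \<nu>) = \<nu>"
proof -
  interpret R: real_distribution \<rho> by fact
  interpret N: real_distribution \<nu> by fact
  have Fm[measurable]: "cdf \<rho> \<in> borel_measurable borel" by (rule cdf_meas) unfold_locales
  have Gm[measurable]: "cdf_ginv \<nu> \<in> borel_measurable borel" by (rule ginv_meas[OF nd])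
  show cm: "cdt \<rho> \<nu> \<in> borel_measurable borel" unfolding cdt_def by measurable
  have cm': "cdt \<rho> \<nu> \<in> borel_measurable \<rho>" using cm by simp
  define X where "X = {x. 0 < cdf \<rho> x \<and> cdf \<rho> x < 1}"
  have NX: "- X \<in> null_sets \<rho>"
  proof -
    have s1: "{x. cdf \<rho> x \<le> 0} \<in> sets \<rho>" by measurable
    have s2: "{x. 1 \<le> cdf \<rho> x} \<in> sets \<rho>" by measurable
    have m1: "measure \<rho> {x. cdf \<rho> x \<le> 0} = 0" using unif_le[OF rd na, of 0] by simp
    have m2: "measure \<rho> {x. 1 \<le> cdf \<rho> x} = 1 - 1"
      by (rule uc_measure[OF rd na]) (use s2 in \<open>auto intro: order_trans R.cdf_nondecreasing\<close>)
    have "-X = {x. cdf \<rho> x \<le> 0} \<union> {x. 1 \<le> cdf \<rho> x}" unfolding X_def by auto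
    moreover have "{x. cdf \<rho> x \<le> 0} \<in> null_sets \<rho>" "{x. 1 \<le> cdf \<rho> x} \<in> null_sets \<rho>"
      using s1 s2 m1 m2[simplified] by (auto simp: null_sets_def R.emeasure_eq_measure)
    ultimately show ?thesis by (metis null_sets.Un)
  qed
  have eqX: "measure \<rho> B = measure \<rho> (B \<inter> X)" if "B \<in> sets \<rho>" for B
  proof -
    have "B \<inter> X = B - (-X)" by auto
    then show ?thesis using measure_Diff_null_set[OF that NX] by simp
  qed
  have "cdf (distr \<rho> borel (cdt \<rho> \<nu>)) s = cdf \<nu> s" for s
  proof -
    define c where "c = cdf \<nu> s"
    have c0: "0 \<le> c" "c \<le> 1" unfolding c_def using N.cdf_nonneg N.cdf_bounded_prob by auto
    define A where "A = {x. cdt \<rho> \<nu> x \<le> s}"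
    have As: "A \<in> sets \<rho>" 
    proof -
      have "cdt \<rho> \<nu> -` {..s} \<in> sets borel" using cm by (rule measurable_sets_borel) auto
      then show ?thesis unfolding A_def by (simp add: vimage_def)
    qed
    have L: "{x. cdf \<rho> x < c} \<in> sets \<rho>" "{x. cdf \<rho> x \<le> c} \<in> sets \<rho>"
    proof -
      have "cdf \<rho> -` {..<c} \<in> sets borel" "cdf \<rho> -` {..c} \<in> sets borel"
        using measurable_sets_borel[OF Fm] by auto
      then show "{x. cdf \<rho> x < c} \<in> sets \<rho>" "{x. cdf \<rho> x \<le> c} \<in> sets \<rho>" by (simp_all add: vimage_def)
    qed
    have "cdf (distr \<rho> borel (cdt \<rho> \<nu>)) s = measure \<rho> A"
      unfolding cdf_def A_def using cm by (subst measure_distr) (auto simp: vimage_def)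
    moreover have "measure \<rho> A \<le> c"
    proof -
      have "A \<inter> X \<subseteq> {x. cdf \<rho> x \<le> c}"
      proof
        fix x assume "x \<in> A \<inter> X"
        then have "cdf_ginv \<nu> (cdf \<rho> x) \<le> s" "0 < cdf \<rho> x" "cdf \<rho> x < 1"
          unfolding A_def X_def cdt_def by auto
        from ginv_le2[OF nd this(2,3,1)] show "x \<in> {x. cdf \<rho> x \<le> c}" unfolding c_def by simp
      qed
      then have "measure \<rho> (A \<inter> X) \<le> measure \<rho> {x. cdf \<rho> x \<le> c}"
        using L by (intro R.finite_measure_mono) auto
      then show ?thesis using eqX[OF As] unif_le[OF rd na c0] by simp
    qed
    moreover have "c \<le> measure \<rho> A"
    proof -
      have "{x. cdf \<rho> x < c} \<inter> X \<subseteq> A"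
      proof
        fix x assume "x \<in> {x. cdf \<rho> x < c} \<inter> X"
        then have "cdf \<rho> x < cdf \<nu> s" "0 < cdf \<rho> x" "cdf \<rho> x < 1"
          unfolding c_def X_def by auto
        from ginv_le1[OF nd this(2,3,1)] show "x \<in> A" unfolding A_def cdt_def by simp
      qed
      then have "measure \<rho> ({x. cdf \<rho> x < c} \<inter> X) \<le> measure \<rho> A"
        using As by (intro R.finite_measure_mono) auto
      then show ?thesis using eqX[OF L(1)] unif_lt[OF rd na c0] by simp
    qed
    ultimately show ?thesis unfolding c_def by simp
  qed
  then show "distr \<rho> borel (cdt \<rho> \<nu>) = \<nu>"
    using cm' by (intro cdf_unique nd R.real_distribution_distr) auto
qed



lemma supp_AE:
  fixes \<mu> :: "(real^2) measure"
  assumes s: "sets \<mu> = sets borel"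
  shows "AE x in \<mu>. x \<in> msupport \<mu>"
proof -
  define F where "F = {ball x e | x e. e > 0 \<and> emeasure \<mu> (ball x e) = 0}"
  obtain F' where F': "F' \<subseteq> F" "countable F'" "\<Union>F' = \<Union>F"
    using Lindelof[of F] unfolding F_def by auto
  have "(\<Union>A\<in>F'. A) \<in> null_sets \<mu>"
  proof (rule null_sets_UN')
    fix A assume "A \<in> F'"
    then obtain x e where "A = ball x e" "emeasure \<mu> (ball x e) = 0" using F' F_def by auto
    then show "A \<in> null_sets \<mu>" using s by (simp add: null_sets_def)
  qed (use F' in auto)
  moreover have "{x \<in> space \<mu>. x \<notin> msupport \<mu>} \<subseteq> (\<Union>A\<in>F'. A)"
  proof
    fix y assume "y \<in> {x \<in> space \<mu>. x \<notin> msupport \<mu>}"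
    then obtain e where "e > 0" "\<not> emeasure \<mu> (ball y e) > 0" unfolding msupport_def by auto
    then have "ball y e \<in> F" unfolding F_def using not_gr_zero by blast
    then show "y \<in> (\<Union>A\<in>F'. A)" using F'(3) \<open>e > 0\<close> centre_in_ball by blast
  qed
  ultimately show ?thesis by (rule AE_I')
qed

lemma inner2: "(x::real^2) \<bullet> t = x$1 * t$1 + x$2 * t$2"
  by (simp add: inner_vec_def sum_2)

theorem proposition4:
  fixes \<rho> :: "real measure" and \<mu> :: "(real^2) measure"
  assumes "prob_space \<rho>" and "sets \<rho> = sets borel"
    and "\<And>x. measure \<rho> {x} = 0"
    and "\<mu> \<in> Pc_star"
  shows "\<exists>c>0. \<forall>\<theta>\<in>S1. std \<rho> (cdt \<rho> (radon \<mu> \<theta>)) \<ge> c"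
proof -
  have rd: "real_distribution \<rho>" using assms(1,2) by (simp add: real_distribution_def real_distribution_axioms_def)
  note na = assms(3)
  have ps: "prob_space \<mu>" and sm: "sets \<mu> = sets borel" and cpt: "compact (msupport \<mu>)"
    and ad: "aff_dim (msupport \<mu>) > 1" using assms(4) by (auto simp: Pc_star_def)
  interpret M: prob_space \<mu> by fact
  have meas: "f \<in> borel_measurable \<mu>" if "f \<in> borel_measurable borel" for f :: "real^2 \<Rightarrow> real"
    by (subst measurable_cong_sets[OF sm refl]) (rule that)
  obtain R where R: "\<And>x. x \<in> msupport \<mu> \<Longrightarrow> norm x \<le> R"
    using compact_imp_bounded[OF cpt] by (auto simp: bounded_iff)
  have AER: "AE x in \<mu>. norm x \<le> R"
    using supp_AE[OF sm] by eventually_elim (rule R)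
  have c1: "AE x in \<mu>. norm (x$i) \<le> R" for i
    using AER by eventually_elim (metis component_le_norm_cart order_trans real_norm_def)
  have m1: "(\<lambda>x::real^2. x$i) \<in> borel_measurable \<mu>" for i
    by (intro meas borel_measurable_continuous_onI continuous_intros)
  have int1: "integrable \<mu> (\<lambda>x. x$i)" for i
    by (rule M.integrable_const_bound[OF c1 m1])
  have int2: "integrable \<mu> (\<lambda>x. x$i * x$j)" for i j
  proof (rule M.integrable_const_bound[where B="R*R"])
    show "AE x in \<mu>. norm (x$i * x$j) \<le> R*R"
      using c1[of i] c1[of j] by eventually_elim (auto simp: abs_mult intro: mult_mono)
  qed (intro meas borel_measurable_continuous_onI continuous_intros)
  define a where "a i j = (\<integral>x. x$i * x$j \<partial>\<mu>)" for i j
  define m where "m i = (\<integral>x. x$i \<partial>\<mu>)" for i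
  define Q where "Q t = (t$1)^2 * a 1 1 + 2 * t$1 * t$2 * a 1 2 + (t$2)^2 * a 2 2 - (m 1 * t$1 + m 2 * t$2)^2"
    for t :: "real^2"
  define V where "V t = (\<integral>x. (x \<bullet> t - (\<integral>y. y \<bullet> t \<partial>\<mu>))\<^sup>2 \<partial>\<mu>)" for t :: "real^2"
  have VQ: "V t = Q t" for t
  proof -
    define M where "M = m 1 * t$1 + m 2 * t$2"
    have i1: "integrable \<mu> (\<lambda>x. c * x$i)" for c i using int1[of i] by simp
    have i2: "integrable \<mu> (\<lambda>x. c * (x$i * x$j))" for c i j using int2[of i j] by simp
    have e1: "(\<integral>x. x \<bullet> t \<partial>\<mu>) = M"
    proof -
      have "(\<integral>x. x \<bullet> t \<partial>\<mu>) = (\<integral>x. t$1 * x$1 + t$2 * x$2 \<partial>\<mu>)"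
        by (simp add: inner2 mult.commute)
      also have "\<dots> = (\<integral>x. t$1 * x$1 \<partial>\<mu>) + (\<integral>x. t$2 * x$2 \<partial>\<mu>)"
        by (rule Bochner_Integration.integral_add[OF i1 i1])
      finally show ?thesis unfolding M_def m_def by (simp add: mult.commute)
    qed
    have pw: "(x \<bullet> t - M)\<^sup>2 = (((((t$1)^2 * (x$1*x$1) + 2*t$1*t$2*(x$1*x$2)) + (t$2)^2*(x$2*x$2))
        + (-2*M*t$1) * x$1) + (-2*M*t$2)*x$2) + M^2" for x :: "real^2"
      unfolding inner2 by (simp add: power2_eq_square algebra_simps)
    have "V t = (\<integral>x. (((((t$1)^2 * (x$1*x$1) + 2*t$1*t$2*(x$1*x$2)) + (t$2)^2*(x$2*x$2))
        + (-2*M*t$1) * x$1) + (-2*M*t$2)*x$2) + M^2 \<partial>\<mu>)"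
      unfolding V_def e1 pw ..
    also have "\<dots> = (t$1)^2 * a 1 1 + 2*t$1*t$2*a 1 2 + (t$2)^2*a 2 2 + (-2*M*t$1) * m 1 + (-2*M*t$2)*m 2 + M^2"
    proof -
      have hb: "has_bochner_integral \<mu> (\<lambda>x. ((((t$1)^2 * (x$1*x$1) + 2*t$1*t$2*(x$1*x$2)) + (t$2)^2*(x$2*x$2))
        + (-2*M*t$1) * x$1) + (-2*M*t$2)*x$2)
        ((t$1)^2 * a 1 1 + 2*t$1*t$2*a 1 2 + (t$2)^2*a 2 2 + (-2*M*t$1) * m 1 + (-2*M*t$2)*m 2)"
        unfolding a_def m_def
        by (intro has_bochner_integral_add has_bochner_integral_mult_right has_bochner_integral_integrable int1 int2)
      have "(\<integral>x. (((((t$1)^2 * (x$1*x$1) + 2*t$1*t$2*(x$1*x$2)) + (t$2)^2*(x$2*x$2))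
        + (-2*M*t$1) * x$1) + (-2*M*t$2)*x$2) + M^2 \<partial>\<mu>) =
        (\<integral>x. ((((t$1)^2 * (x$1*x$1) + 2*t$1*t$2*(x$1*x$2)) + (t$2)^2*(x$2*x$2))
        + (-2*M*t$1) * x$1) + (-2*M*t$2)*x$2 \<partial>\<mu>) + (\<integral>x. M^2 \<partial>\<mu>)"
        by (rule Bochner_Integration.integral_add[OF integrable.intros[OF hb] M.integrable_const])
      then show ?thesis using has_bochner_integral_integral_eq[OF hb] by (simp add: M.prob_space)
    qed
    also have "\<dots> = Q t" unfolding Q_def M_def by (simp add: power2_eq_square algebra_simps)
    finally show ?thesis .
  qed
  have std_eq: "std \<rho> (cdt \<rho> (radon \<mu> t)) = sqrt (V t)" for t
  proof -
    have mt: "(\<lambda>x. x \<bullet> t) \<in> borel_measurable \<mu>"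
      by (intro meas borel_measurable_continuous_onI continuous_intros)
    define \<nu> where "\<nu> = radon \<mu> t"
    have nu: "\<nu> = distr \<mu> borel (\<lambda>x. x \<bullet> t)" unfolding \<nu>_def radon_def by simp
    have nd: "real_distribution \<nu>" unfolding nu by (rule M.real_distribution_distr[OF mt])
    note cd = cdt_distr[OF rd na nd]
    define g where "g = cdt \<rho> \<nu>"
    have gm: "g \<in> borel_measurable \<rho>" unfolding g_def
      by (subst measurable_cong_sets[OF assms(2) refl]) (rule cd(1))
    have dg: "distr \<rho> borel g = \<nu>" unfolding g_def by (rule cd(2))
    have "mean \<rho> g = (\<integral>y. y \<partial>\<nu>)"
      unfolding mean_def using integral_distr[OF gm, of "\<lambda>y. y"] dg by simp
    also have "\<dots> = (\<integral>x. x \<bullet> t \<partial>\<mu>)"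
      unfolding nu using integral_distr[OF mt, of "\<lambda>y. y"] by simp
    finally have mg: "mean \<rho> g = (\<integral>x. x \<bullet> t \<partial>\<mu>)" .
    have "(\<integral>x. (g x - mean \<rho> g)\<^sup>2 \<partial>\<rho>) = (\<integral>y. (y - mean \<rho> g)\<^sup>2 \<partial>\<nu>)"
      using integral_distr[OF gm, of "\<lambda>y. (y - mean \<rho> g)\<^sup>2"] dg by simp
    also have "\<dots> = (\<integral>x. (x \<bullet> t - mean \<rho> g)\<^sup>2 \<partial>\<mu>)"
      unfolding nu using integral_distr[OF mt, of "\<lambda>y. (y - mean \<rho> g)\<^sup>2"] by simp
    finally show ?thesis unfolding std_def V_def g_def[symmetric] \<nu>_def[symmetric] mg by simp
  qed
  have Vpos: "V t > 0" if "t \<in> S1" for t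
  proof (rule ccontr)
    assume nv: "\<not> V t > 0"
    have nt: "norm t = 1" using that by (simp add: S1_def)
    define M where "M = (\<integral>y. y \<bullet> t \<partial>\<mu>)"
    have bx: "\<bar>x \<bullet> t\<bar> \<le> norm x" for x :: "real^2"
      using Cauchy_Schwarz_ineq2[of x t] nt by simp
    have fi: "integrable \<mu> (\<lambda>x. (x \<bullet> t - M)\<^sup>2)"
    proof (rule M.integrable_const_bound[where B="(R + \<bar>M\<bar>)\<^sup>2"])
      show "AE x in \<mu>. norm ((x \<bullet> t - M)\<^sup>2) \<le> (R + \<bar>M\<bar>)\<^sup>2"
        using AER
      proof eventually_elim
        fix x :: "real^2" assume "norm x \<le> R"
        then have "\<bar>x \<bullet> t - M\<bar> \<le> R + \<bar>M\<bar>" using bx[of x] by linarith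
        then have "\<bar>x \<bullet> t - M\<bar>\<^sup>2 \<le> (R + \<bar>M\<bar>)\<^sup>2" by (rule power_mono) simp
        then show "norm ((x \<bullet> t - M)\<^sup>2) \<le> (R + \<bar>M\<bar>)\<^sup>2" by simp
      qed
    qed (intro meas borel_measurable_continuous_onI continuous_intros)
    have "V t \<ge> 0" unfolding V_def by (intro integral_nonneg_AE) auto
    then have "V t = 0" using nv by simp
    then have "AE x in \<mu>. (x \<bullet> t - M)\<^sup>2 = 0"
      using integral_nonneg_eq_0_iff_AE[OF fi] unfolding V_def M_def by simp
    then have "AE x in \<mu>. x \<bullet> t = M" by eventually_elim simp
    then obtain N where N: "{x\<in>space \<mu>. \<not> x \<bullet> t = M} \<subseteq> N" "emeasure \<mu> N = 0" "N \<in> sets \<mu>"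
      by (auto elim!: AE_E)
    have sp: "space \<mu> = UNIV" using sets_eq_imp_space_eq[OF sm] by simp
    have "msupport \<mu> \<subseteq> {x. t \<bullet> x = M}"
    proof
      fix y assume y: "y \<in> msupport \<mu>"
      show "y \<in> {x. t \<bullet> x = M}"
      proof (rule ccontr)
        assume "y \<notin> {x. t \<bullet> x = M}"
        then have ne: "y \<bullet> t \<noteq> M" by (simp add: inner_commute)
        define e where "e = \<bar>y \<bullet> t - M\<bar>"
        have e0: "e > 0" using ne unfolding e_def by simp
        have "ball y e \<subseteq> N"
        proof
          fix x assume "x \<in> ball y e"
          then have "norm (x - y) < e" by (simp add: dist_norm norm_minus_commute)
          moreover have "\<bar>(x - y) \<bullet> t\<bar> \<le> norm (x - y)" by (rule bx)
          ultimately have "\<bar>x \<bullet> t - y \<bullet> t\<bar> < e" by (simp add: inner_diff_left)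
          then have "x \<bullet> t \<noteq> M" unfolding e_def by linarith
          then show "x \<in> N" using N(1) sp by auto
        qed
        then have "emeasure \<mu> (ball y e) \<le> emeasure \<mu> N" using N(3) by (rule emeasure_mono)
        then have "emeasure \<mu> (ball y e) = 0" using N(2) by simp
        then show False using y e0 unfolding msupport_def by auto
      qed
    qed
    then have "aff_dim (msupport \<mu>) \<le> aff_dim {x. t \<bullet> x = M}" by (rule aff_dim_subset)
    also have "\<dots> = 1" using nt by (subst aff_dim_hyperplane) auto
    finally show False using ad by simp
  qed
  have cQ: "continuous_on S1 Q" unfolding Q_def by (intro continuous_intros)
  have cS: "compact S1" "S1 \<noteq> {}"
    unfolding S1_def using compact_sphere[of "0::real^2" 1] 
    by (auto simp: sphere_def intro!: exI[of _ "axis 1 1"])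
  obtain t0 where t0: "t0 \<in> S1" "\<And>t. t \<in> S1 \<Longrightarrow> Q t0 \<le> Q t"
    using continuous_attains_inf[OF cS cQ] by auto
  show ?thesis
  proof (intro exI conjI ballI)
    show "sqrt (Q t0) > 0" using Vpos[OF t0(1)] VQ by simp
    fix t assume "t \<in> S1"
    then show "sqrt (Q t0) \<le> std \<rho> (cdt \<rho> (radon \<mu> t))"
      using t0(2) std_eq VQ by simp
  qed
qed

end
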